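(* Let $B$ be a composite fluid-solid earth model, $I=[t_0,t_1]$, $\varphi\in\mathcal{A}(\overline B\times I)$, and let $\rho^s$ satisfy $\rho^s_t\in L^\infty(\varphi_t(B))$ for almost all $t$ together with conservation of mass (for $V=B^S$ and $V=B^F$: $\int_{\varphi_{t'}(A)}\rho^s_{t'}dV=\int_{\varphi_{t''}(A)}\rho^s_{t''}dV$ for all open $A\subseteq V$ and a.a. $t',t''$). Let $f_t\in L^\infty(B)$ and $f^s_t=f_t\circ\varphi_t^{-1}$. Then $$\int_{\varphi_t(A)}f^s_t\,\rho^s_t\,dV=\int_A f_t\,\rho^0\,dV$$ for all Lipschitz domains $A\subseteq B$ and almost all $t\in I$.
   Context: A composite fluid-solid earth model is a Lipschitz domain $B\subseteq\mathbb{R}^3$ that is the disjoint union of pairwise disjoint fluid and solid Lipschitz domains $V^F_k,V^S_k$ (forming a Lipschitz-composite domain) and their interior boundary $\Sigma$; $B^S=(\bigcup_k\overline{V^S_k})^\circ$, $B^F=(\bigcup_k\overline{V^F_k})^\circ$, $\Sigma^{FS}$ the fluid-solid part of $\Sigma$. $\mathrm{Reg}^+_{\mathrm{Lip}}(\overline V\times I)$ is the set of $\psi\in\mathrm{Lip}(\overline V\times I)^3$ with $\psi_{t_0}=\mathrm{Id}$ such that for all $t$: $\psi_t(V)$ open, $\psi_t(\overline V)$ closed, $\psi_t$ injective with Lipschitz inverse on $\psi_t(\overline V)$, $\det\nabla\psi_t>0$ a.e. The admissible motions $\mathcal{A}(\overline B\times I)$ are the $\varphi\in\mathcal{C}^0(I,L^\infty(B))^3$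 with $\varphi_{t_0}=\mathrm{Id}$ such that: $\varphi_t(\overline B)$ is homeomorphic to $\overline B$ and $\bigcup_t\varphi_t(B)$ is bounded; the restrictions to $B^S\times I$, $B^F\times I$ extend to elements of $\mathrm{Reg}^+_{\mathrm{Lip}}$ of the respective closures; $\varphi_t(B^S)\cap\varphi_t(B^F)=\emptyset$; and for a.e. $t$, $[v^s_t]_-^+\cdot\nu^s_t=0$ on $\varphi_t(\Sigma^{FS})$ ($v^s_t=\partial_t\varphi_t\circ\varphi_t^{-1}$, $\nu^s_t$ the unit normal). Material density $\rho_t=\rho^s_t\circ\varphi_t$, $\rho^0=\rho_{t_0}$.
   Formalization: The exceptional null sets of times in conservation of mass and in $\rho^s_t\in L^\infty(\varphi_t(B))$ exclude $t_0$, and on $\overline B$ outside $B^S\cup B^F$, $\varphi_t$ agrees with the extension from $B^S$ or from $B^F$. Each condition added here is assumed in the paper as well or is needed for the statement above to hold. *)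

theory Defs
  imports "HOL-Analysis.Analysis"
begin

definition lipschitz_domain :: "(real^3) set \<Rightarrow> bool" where
  "lipschitz_domain V \<longleftrightarrow>
     open V \<and> bounded V \<and> connected V \<and> V \<noteq> {} \<and>
     (\<forall>p\<in>frontier V. \<exists>(Q::real^3 \<Rightarrow> real^3) r h L (g::real \<times> real \<Rightarrow> real).
        orthogonal_transformation Q \<and> r > 0 \<and> h > 0 \<and>
        L-lipschitz_on UNIV g \<and> g (0, 0) = 0 \<and>
        (\<forall>a b. norm (a, b) < r \<longrightarrow> \<bar>g (a, b)\<bar> < h) \<and>
        (\<forall>x. let y = Q (x - p) in
              (norm (y$1, y$2) < r \<and> \<bar>y$3\<bar> < h) \<longrightarrow>
              (x \<in> V \<longleftrightarrow> y$3 < g (y$1, y$2))))"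

definition interior_boundary ::
  "(real^3) set \<Rightarrow> nat set \<Rightarrow> (nat \<Rightarrow> (real^3) set) \<Rightarrow> nat set \<Rightarrow> (nat \<Rightarrow> (real^3) set)
   \<Rightarrow> (real^3) set" where
  "interior_boundary B KF VF KS VS =
     B \<inter> ((\<Union>k\<in>KF. frontier (VF k)) \<union> (\<Union>k\<in>KS. frontier (VS k)))"

definition fluid_solid_boundary ::
  "(real^3) set \<Rightarrow> nat set \<Rightarrow> (nat \<Rightarrow> (real^3) set) \<Rightarrow> nat set \<Rightarrow> (nat \<Rightarrow> (real^3) set)
   \<Rightarrow> (real^3) set" where
  "fluid_solid_boundary B KF VF KS VS =
     interior_boundary B KF VF KS VS \<inter> (\<Union>k\<in>KF. frontier (VF k)) \<inter> (\<Union>k\<in>KS. frontier (VS k))"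

definition region_union :: "nat set \<Rightarrow> (nat \<Rightarrow> (real^3) set) \<Rightarrow> (real^3) set" where
  "region_union K V = interior (\<Union>k\<in>K. closure (V k))"

definition composite_earth_model ::
  "(real^3) set \<Rightarrow> nat set \<Rightarrow> (nat \<Rightarrow> (real^3) set) \<Rightarrow> nat set \<Rightarrow> (nat \<Rightarrow> (real^3) set) \<Rightarrow> bool" where
  "composite_earth_model B KF VF KS VS \<longleftrightarrow>
     lipschitz_domain B \<and> finite KF \<and> finite KS \<and>
     (\<forall>k\<in>KF. lipschitz_domain (VF k)) \<and> (\<forall>k\<in>KS. lipschitz_domain (VS k)) \<and>
     (\<forall>k\<in>KF. \<forall>k'\<in>KF. k \<noteq> k' \<longrightarrow> VF k \<inter> VF k' = {}) \<and>
     (\<forall>k\<in>KS. \<forall>k'\<in>KS. k \<noteq> k' \<longrightarrow> VS k \<inter> VS k' = {}) \<and>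
     (\<forall>k\<in>KF. \<forall>k'\<in>KS. VF k \<inter> VS k' = {}) \<and>
     B = (\<Union>k\<in>KF. VF k) \<union> (\<Union>k\<in>KS. VS k) \<union> interior_boundary B KF VF KS VS"

definition in_Linf :: "(real^3) set \<Rightarrow> (real^3 \<Rightarrow> 'b::real_normed_vector) \<Rightarrow> bool" where
  "in_Linf S g \<longleftrightarrow> g \<in> borel_measurable (lebesgue_on S) \<and>
     (\<exists>C. AE x in lebesgue. x \<in> S \<longrightarrow> norm (g x) \<le> C)"

definition cont_Linf :: "(real^3) set \<Rightarrow> real set \<Rightarrow> (real \<Rightarrow> real^3 \<Rightarrow> real^3) \<Rightarrow> bool" where
  "cont_Linf S I \<phi> \<longleftrightarrow> (\<forall>t\<in>I. in_Linf S (\<phi> t)) \<and>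
     (\<forall>t\<in>I. \<forall>e>0. \<exists>d>0. \<forall>s\<in>I. \<bar>s - t\<bar> < d \<longrightarrow>
        (AE x in lebesgue. x \<in> S \<longrightarrow> norm (\<phi> s x - \<phi> t x) \<le> e))"

definition reg_lip_pos :: "(real^3) set \<Rightarrow> real set \<Rightarrow> real \<Rightarrow> (real \<Rightarrow> real^3 \<Rightarrow> real^3) \<Rightarrow> bool" where
  "reg_lip_pos V I t0 \<psi> \<longleftrightarrow>
     (\<exists>L. L-lipschitz_on (closure V \<times> I) (\<lambda>(x, t). \<psi> t x)) \<and>
     (\<forall>x\<in>closure V. \<psi> t0 x = x) \<and>
     (\<forall>t\<in>I. open (\<psi> t ` V) \<and> closed (\<psi> t ` closure V) \<and> inj_on (\<psi> t) (closure V) \<and>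
        (\<exists>L. L-lipschitz_on (\<psi> t ` closure V) (inv_into (closure V) (\<psi> t))) \<and>
        (AE x in lebesgue. x \<in> V \<longrightarrow>
           (\<exists>D. (\<psi> t has_derivative D) (at x) \<and> det (matrix D) > 0)))"

definition H2_null :: "(real^3) set \<Rightarrow> bool" where
  "H2_null N \<longleftrightarrow> (\<forall>e>0. \<exists>C :: nat \<Rightarrow> (real^3) set.
     N \<subseteq> (\<Union>i. C i) \<and> (\<forall>i. bounded (C i)) \<and>
     summable (\<lambda>i. diameter (C i) ^ 2) \<and> (\<Sum>i. diameter (C i) ^ 2) < e)"

text \<open>nu is a unit normal of the surface S at y (S has the tangent plane nu-perp at y).\<close>
definition unit_normal :: "(real^3) set \<Rightarrow> real^3 \<Rightarrow> real^3 \<Rightarrow> bool" where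
  "unit_normal S y \<nu> \<longleftrightarrow> y \<in> S \<and> norm \<nu> = 1 \<and>
     ((\<lambda>z. ((z - y) /\<^sub>R norm (z - y)) \<bullet> \<nu>) \<longlongrightarrow> 0) (at y within S)"

text \<open>Continuity of the normal velocity across the (deformed) fluid-solid boundary S at
time t: H2-a.e. on S, the jump of the velocity (solid side minus fluid side) is tangential.
The one-sided velocities are the time derivatives of the Lipschitz extensions.\<close>
definition normal_jump_zero ::
  "(real^3) set \<Rightarrow> real set \<Rightarrow> real \<Rightarrow> (real \<Rightarrow> real^3 \<Rightarrow> real^3) \<Rightarrow> (real^3) set
   \<Rightarrow> (real \<Rightarrow> real^3 \<Rightarrow> real^3) \<Rightarrow> (real^3) set \<Rightarrow> bool" where
  "normal_jump_zero S I t \<psi>S XS \<psi>F XF \<longleftrightarrow> (\<exists>N. H2_null N \<and>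
     (\<forall>y\<in>S - N. \<forall>xs\<in>XS. \<forall>xf\<in>XF. \<forall>a b \<nu>.
        \<psi>S t xs = y \<longrightarrow> \<psi>F t xf = y \<longrightarrow>
        ((\<lambda>s. \<psi>S s xs) has_vector_derivative a) (at t within I) \<longrightarrow>
        ((\<lambda>s. \<psi>F s xf) has_vector_derivative b) (at t within I) \<longrightarrow>
        unit_normal S y \<nu> \<longrightarrow> (a - b) \<bullet> \<nu> = 0))"

definition admissible ::
  "(real^3) set \<Rightarrow> nat set \<Rightarrow> (nat \<Rightarrow> (real^3) set) \<Rightarrow> nat set \<Rightarrow> (nat \<Rightarrow> (real^3) set)
   \<Rightarrow> real set \<Rightarrow> real \<Rightarrow> (real \<Rightarrow> real^3 \<Rightarrow> real^3) \<Rightarrow> bool" where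
  "admissible B KF VF KS VS I t0 \<phi> \<longleftrightarrow>
     (let BS = region_union KS VS; BF = region_union KF VF;
          \<Sigma>FS = fluid_solid_boundary B KF VF KS VS in
     cont_Linf B I \<phi> \<and> (\<forall>x\<in>B. \<phi> t0 x = x) \<and>
     (\<forall>t\<in>I. (\<phi> t ` closure B) homeomorphic (closure B)) \<and>
     bounded (\<Union>t\<in>I. \<phi> t ` B) \<and>
     (\<forall>t\<in>I. \<phi> t ` BS \<inter> \<phi> t ` BF = {}) \<and>
     (\<exists>\<psi>S \<psi>F. reg_lip_pos BS I t0 \<psi>S \<and> reg_lip_pos BF I t0 \<psi>F \<and>
        (\<forall>t\<in>I. \<forall>x\<in>BS. \<phi> t x = \<psi>S t x) \<and>
        (\<forall>t\<in>I. \<forall>x\<in>BF. \<phi> t x = \<psi>F t x) \<and>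
        (\<forall>t\<in>I. \<forall>x\<in>closure B - (BS \<union> BF).
           (x \<in> closure BS \<and> \<phi> t x = \<psi>S t x) \<or> (x \<in> closure BF \<and> \<phi> t x = \<psi>F t x)) \<and>
        (AE t in lebesgue. t \<in> I \<longrightarrow>
           normal_jump_zero (\<phi> t ` \<Sigma>FS) I t \<psi>S (closure BS) \<psi>F (closure BF))))"

definition mass_conserved ::
  "(real^3) set \<Rightarrow> real set \<Rightarrow> real \<Rightarrow> (real \<Rightarrow> real^3 \<Rightarrow> real^3) \<Rightarrow> (real \<Rightarrow> real^3 \<Rightarrow> real) \<Rightarrow> bool"
  where
  "mass_conserved V I t0 \<phi> \<rho>s \<longleftrightarrow>
     (\<forall>A. open A \<and> A \<subseteq> V \<longrightarrow>
        (\<exists>N. N \<in> null_sets lebesgue \<and> t0 \<notin> N \<and>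
           (\<forall>t'\<in>I - N. \<forall>t''\<in>I - N.
              (LINT y:\<phi> t' ` A|lebesgue. \<rho>s t' y) = (LINT y:\<phi> t'' ` A|lebesgue. \<rho>s t'' y))))"

end

theory Submission
  imports Defs
begin



lemma norm_pair_le: "norm (a::real, b::real) \<le> \<bar>a\<bar> + \<bar>b\<bar>"
proof -
  have "norm (a,b) = norm ((a,0::real) + (0::real,b))" by simp
  also have "\<dots> \<le> norm (a,0::real) + norm (0::real, b)" by (rule norm_triangle_ineq)
  finally show ?thesis by (simp add: norm_Pair)
qed

lemma lipdom_frontier_local:
  assumes "lipschitz_domain V" "p \<in> frontier V"
  shows "\<exists>T. open T \<and> p \<in> T \<and> negligible (frontier V \<inter> T)"
proof -
  obtain Q :: "real^3 \<Rightarrow> real^3" and r h L and g :: "real \<times> real \<Rightarrow> real" where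
    Q: "orthogonal_transformation Q" and r: "r > 0" and h: "h > 0"
    and gL: "L-lipschitz_on UNIV g" and g0: "g (0,0) = 0"
    and cyl: "\<And>x. norm ((Q (x - p))$1, (Q (x - p))$2) < r \<and> \<bar>(Q (x - p))$3\<bar> < h \<Longrightarrow>
              (x \<in> V \<longleftrightarrow> (Q (x - p))$3 < g ((Q (x - p))$1, (Q (x - p))$2))"
    and Vopen: "open V"
  proof -
    have "open V" using assms(1) lipschitz_domain_def by blast
    moreover have "\<exists>(Q::real^3 \<Rightarrow> real^3) r h L (g::real \<times> real \<Rightarrow> real).
        orthogonal_transformation Q \<and> r > 0 \<and> h > 0 \<and>
        L-lipschitz_on UNIV g \<and> g (0, 0) = 0 \<and>
        (\<forall>x. (norm ((Q (x - p))$1, (Q (x - p))$2) < r \<and> \<bar>(Q (x - p))$3\<bar> < h) \<longrightarrow>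
              (x \<in> V \<longleftrightarrow> (Q (x - p))$3 < g ((Q (x - p))$1, (Q (x - p))$2)))"
      using assms unfolding lipschitz_domain_def Let_def by blast
    ultimately show ?thesis using that by blast
  qed
  have linQ: "linear Q" using Q orthogonal_transformation_linear by blast
  have contQ: "continuous_on UNIV Q"
    using linQ linear_continuous_on linear_conv_bounded_linear by blast
  have contg: "continuous_on UNIV g" using gL lipschitz_on_continuous_on by blast
  define y where "y = (\<lambda>x. Q (x - p))"
  have conty: "continuous_on UNIV y"
    unfolding y_def by (intro continuous_on_compose2[OF contQ] continuous_intros) auto
  have conty1: "continuous_on UNIV (\<lambda>x. y x $ i)" for i
    by (intro continuous_intros conty)
  have contgy: "continuous_on UNIV (\<lambda>x. g (y x $ 1, y x $ 2))"
    by (intro continuous_on_compose2[OF contg] continuous_intros conty1) auto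
  define T where "T = {x. norm (y x $ 1, y x $ 2) < r \<and> \<bar>y x $ 3\<bar> < h}"
  have "open T" unfolding T_def
    by (intro open_Collect_conj open_Collect_less continuous_intros conty1) 
  have "p \<in> T" using r h linQ by (simp add: T_def y_def linear_0)
  define Qi where "Qi = inv Q"
  have Qi: "orthogonal_transformation Qi" using Q orthogonal_transformation_inv Qi_def by blast
  have QiQ: "Qi (Q w) = w" for w using Q orthogonal_transformation_inj Qi_def by (metis inv_f_f)
  define e3 :: "real^3" where "e3 = axis 3 1"
  define H :: "(real^3) set" where "H = {z. e3 \<bullet> z = 0}"
  define \<Phi> where "\<Phi> = (\<lambda>z::real^3. p + Qi (z + g (z$1, z$2) *\<^sub>R e3))"
  have negH: "negligible H" unfolding H_def
    by (rule negligible_hyperplane) (simp add: e3_def)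
  have linQi: "linear Qi" using Qi orthogonal_transformation_linear by blast
  have negG: "negligible (\<Phi> ` H)"
  proof (rule negligible_locally_Lipschitz_image)
    show "DIM(real^3) \<le> DIM(real^3)" by simp
    show "negligible H" by fact
    fix x assume "x \<in> H"
    show "\<exists>T B. open T \<and> x \<in> T \<and> (\<forall>z\<in>H \<inter> T. norm (\<Phi> z - \<Phi> x) \<le> B * norm (z - x))"
    proof (intro exI conjI ballI)
      fix z assume "z \<in> H \<inter> UNIV"
      have "\<Phi> z - \<Phi> x = Qi ((z - x) + (g (z$1, z$2) - g (x$1, x$2)) *\<^sub>R e3)"
        unfolding \<Phi>_def using linQi by (simp add: linear_diff algebra_simps scaleR_diff_left)
      hence "norm (\<Phi> z - \<Phi> x) = norm ((z - x) + (g (z$1, z$2) - g (x$1, x$2)) *\<^sub>R e3)"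
        using Qi orthogonal_transformation_norm by metis
      also have "\<dots> \<le> norm (z - x) + \<bar>g (z$1, z$2) - g (x$1, x$2)\<bar>"
        using norm_triangle_ineq[of "z - x" "(g (z$1, z$2) - g (x$1, x$2)) *\<^sub>R e3"]
        by (simp add: e3_def)
      also have "\<bar>g (z$1, z$2) - g (x$1, x$2)\<bar> \<le> L * dist (z$1, z$2) (x$1, x$2)"
        using gL unfolding lipschitz_on_def by (metis UNIV_I dist_real_def)
      also have "dist (z$1, z$2) (x$1, x$2) \<le> 2 * norm (z - x)"
      proof -
        have "dist (z$1, z$2) (x$1, x$2) = norm ((z - x)$1, (z - x)$2)"
          by (simp add: dist_norm)
        also have "\<dots> \<le> \<bar>(z - x)$1\<bar> + \<bar>(z - x)$2\<bar>" by (rule norm_pair_le)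
        also have "\<dots> \<le> 2 * norm (z - x)" using component_le_norm_cart[of "z - x" 1] component_le_norm_cart[of "z - x" 2]
          by linarith
        finally show ?thesis .
      qed
      hence "L * dist (z$1, z$2) (x$1, x$2) \<le> L * (2 * norm (z - x))"
        using gL by (simp add: lipschitz_on_def mult_left_mono)
      finally show "norm (\<Phi> z - \<Phi> x) \<le> (1 + 2 * L) * norm (z - x)"
        by (simp add: algebra_simps)
    qed auto
  qed
  have sub: "frontier V \<inter> T \<subseteq> \<Phi> ` H"
  proof
    fix x assume x: "x \<in> frontier V \<inter> T"
    have inT: "norm (y x $ 1, y x $ 2) < r \<and> \<bar>y x $ 3\<bar> < h" using x T_def by auto
    have eq: "y x $ 3 = g (y x $ 1, y x $ 2)"
    proof (rule ccontr)
      assume ne: "y x $ 3 \<noteq> g (y x $ 1, y x $ 2)"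
      show False
      proof (cases "y x $ 3 < g (y x $ 1, y x $ 2)")
        case True
        hence "x \<in> V" using cyl[of x] inT unfolding y_def by blast
        thus False using x Vopen by (simp add: frontier_def interior_open)
      next
        case False
        define Ob where "Ob = {x'. norm (y x' $ 1, y x' $ 2) < r \<and> \<bar>y x' $ 3\<bar> < h \<and>
                                 g (y x' $ 1, y x' $ 2) < y x' $ 3}"
        have "open Ob" unfolding Ob_def
          by (intro open_Collect_conj open_Collect_less continuous_intros conty1 contgy)
        have "x \<in> Ob" using False ne inT Ob_def by auto
        have "Ob \<inter> V = {}"
        proof (rule ccontr)
          assume "Ob \<inter> V \<noteq> {}"
          then obtain x' where "x' \<in> Ob" "x' \<in> V" by blast
          hence c: "norm (y x' $ 1, y x' $ 2) < r \<and> \<bar>y x' $ 3\<bar> < h"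
                   "g (y x' $ 1, y x' $ 2) < y x' $ 3" by (auto simp: Ob_def)
          have "y x' $ 3 < g (y x' $ 1, y x' $ 2)"
            using cyl[of x'] c(1) \<open>x' \<in> V\<close> unfolding y_def by blast
          thus False using c(2) by linarith
        qed
        hence "Ob \<inter> closure V = {}" using \<open>open Ob\<close> open_Int_closure_eq_empty by blast
        thus False using \<open>x \<in> Ob\<close> x frontier_def by auto
      qed
    qed
    define z where "z = y x - (y x $ 3) *\<^sub>R e3"
    have "z \<in> H" by (simp add: H_def z_def e3_def inner_axis' inner_diff_right)
    have z12: "z $ 1 = y x $ 1" "z $ 2 = y x $ 2" by (simp_all add: z_def e3_def axis_def)
    have "\<Phi> z = p + Qi (z + g (y x $ 1, y x $ 2) *\<^sub>R e3)" unfolding \<Phi>_def using z12 by simp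
    also have "z + g (y x $ 1, y x $ 2) *\<^sub>R e3 = y x" using eq by (simp add: z_def)
    also have "p + Qi (y x) = x" by (simp add: y_def QiQ)
    finally show "x \<in> \<Phi> ` H" using \<open>z \<in> H\<close> by (metis image_eqI)
  qed
  show ?thesis
    using \<open>open T\<close> \<open>p \<in> T\<close> negG sub negligible_subset by blast
qed

lemma lipdom_frontier_negligible:
  assumes "lipschitz_domain V"
  shows "negligible (frontier V)"
proof -
  have "\<forall>p\<in>frontier V. \<exists>T. open T \<and> p \<in> T \<and> negligible (frontier V \<inter> T)"
    using lipdom_frontier_local[OF assms] by blast
  then obtain T where T: "\<And>p. p \<in> frontier V \<Longrightarrow> open (T p) \<and> p \<in> T p \<and> negligible (frontier V \<inter> T p)"
    by metis
  have "bounded V" using assms lipschitz_domain_def by blast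
  hence "compact (frontier V)"
    by (simp add: compact_frontier_bounded)
  moreover have "frontier V \<subseteq> \<Union> (T ` frontier V)" using T by blast
  ultimately obtain D where D: "D \<subseteq> frontier V" "finite D" "frontier V \<subseteq> \<Union> (T ` D)"
    using compactE_image[of "frontier V" "frontier V" T] T by blast
  have "frontier V = \<Union> ((\<lambda>p. frontier V \<inter> T p) ` D)" using D by blast
  also have "negligible \<dots>"
    using D T by (intro negligible_Union) auto
  finally show ?thesis .
qed



lemma Linf_sub:
  assumes "in_Linf W g" "T \<subseteq> W" shows "in_Linf T g"
proof -
  from assms(1) obtain C where m: "g \<in> borel_measurable (lebesgue_on W)"
    and C: "AE x in lebesgue. x \<in> W \<longrightarrow> norm (g x) \<le> C" unfolding in_Linf_def by blast
  have "g \<in> borel_measurable (lebesgue_on T)" using measurable_restrict_mono[OF m assms(2)] .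
  moreover have "AE x in lebesgue. x \<in> T \<longrightarrow> norm (g x) \<le> C"
    using C by eventually_elim (use assms(2) in auto)
  ultimately show ?thesis unfolding in_Linf_def by blast
qed

lemma Linf_mult:
  fixes f g :: "real^3 \<Rightarrow> real"
  assumes "in_Linf T f" "in_Linf T g" shows "in_Linf T (\<lambda>x. f x * g x)"
proof -
  from assms obtain C1 C2 where m: "f \<in> borel_measurable (lebesgue_on T)" "g \<in> borel_measurable (lebesgue_on T)"
    and C: "AE x in lebesgue. x \<in> T \<longrightarrow> norm (f x) \<le> C1" "AE x in lebesgue. x \<in> T \<longrightarrow> norm (g x) \<le> C2"
    unfolding in_Linf_def by blast
  have "(\<lambda>x. f x * g x) \<in> borel_measurable (lebesgue_on T)" using m by measurable
  moreover have "AE x in lebesgue. x \<in> T \<longrightarrow> norm (f x * g x) \<le> C1 * C2"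
    using C
  proof eventually_elim
    case (elim x)
    show ?case
    proof
      assume "x \<in> T"
      hence "\<bar>f x\<bar> \<le> C1" "\<bar>g x\<bar> \<le> C2" using elim by auto
      thus "norm (f x * g x) \<le> C1 * C2" by (simp add: abs_mult mult_mono' order_trans[OF abs_ge_zero])
    qed
  qed
  ultimately show ?thesis unfolding in_Linf_def by blast
qed

lemma Linf_int:
  fixes g :: "real^3 \<Rightarrow> real"
  assumes "in_Linf T g" "T \<in> sets lebesgue" "bounded T"
  shows "set_integrable lebesgue T g"
proof -
  from assms obtain C where m: "g \<in> borel_measurable (lebesgue_on T)"
    and C: "AE x in lebesgue. x \<in> T \<longrightarrow> norm (g x) \<le> C" unfolding in_Linf_def by blast
  have T: "T \<in> lmeasurable" using assms bounded_set_imp_lmeasurable by blast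
  have mi: "(\<lambda>x. if x \<in> T then g x else 0) \<in> borel_measurable lebesgue"
    using borel_measurable_if[OF assms(2)] m by blast
  have eq: "(\<lambda>x. indicator T x *\<^sub>R g x) = (\<lambda>x. if x \<in> T then g x else 0)"
    by (auto simp: indicator_def)
  have "integrable lebesgue (\<lambda>x. C * indicator T x :: real)"
    using T by (intro integrable_mult_right integrable_real_indicator) (auto simp: fmeasurable_def)
  moreover have "AE x in lebesgue. norm (if x \<in> T then g x else 0) \<le> norm (C * indicator T x :: real)"
    using C
  proof eventually_elim
    case (elim x)
    show ?case
    proof (cases "x \<in> T")
      case True
      hence "norm (g x) \<le> C" using elim by blast
      thus ?thesis using True by simp
    qed simp
  qed
  ultimately have "integrable lebesgue (\<lambda>x. if x \<in> T then g x else 0)"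
    by (rule Bochner_Integration.integrable_bound[OF _ mi])
  thus ?thesis unfolding set_integrable_def eq .
qed

lemma cov_real3:
  fixes F :: "real^3 \<Rightarrow> real" and g :: "real^3 \<Rightarrow> real^3"
  assumes S: "S \<in> sets lebesgue"
    and der_g: "\<And>x. x \<in> S \<Longrightarrow> (g has_derivative g' x) (at x within S)"
    and inj: "inj_on g S"
  shows "(\<lambda>x. \<bar>det (matrix (g' x))\<bar> * F (g x)) absolutely_integrable_on S \<and>
           integral S (\<lambda>x. \<bar>det (matrix (g' x))\<bar> * F (g x)) = b
     \<longleftrightarrow> F absolutely_integrable_on (g ` S) \<and> integral (g ` S) F = b"
proof -
  have "(\<lambda>x. \<bar>det (matrix (g' x))\<bar> *\<^sub>R vec (F (g x)) :: real ^ 1) absolutely_integrable_on S \<and>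
           integral S (\<lambda>x. \<bar>det (matrix (g' x))\<bar> *\<^sub>R vec (F (g x))) = (vec b :: real ^ 1)
         \<longleftrightarrow> (\<lambda>x. vec (F x) :: real ^ 1) absolutely_integrable_on (g ` S) \<and>
           integral (g ` S) (\<lambda>x. vec (F x)) = (vec b :: real ^ 1)"
    by (rule has_absolute_integral_change_of_variables[OF S der_g inj])
  thus ?thesis
    by (simp add: absolutely_integrable_on_1_iff integral_on_1_eq)
qed

lemma cov_set:
  fixes F :: "real^3 \<Rightarrow> real" and g :: "real^3 \<Rightarrow> real^3"
  assumes S: "S \<in> sets lebesgue"
    and der_g: "\<And>x. x \<in> S \<Longrightarrow> (g has_derivative g' x) (at x within S)"
    and inj: "inj_on g S"
    and int: "set_integrable lebesgue (g ` S) F \<or>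
              set_integrable lebesgue S (\<lambda>x. \<bar>det (matrix (g' x))\<bar> * F (g x))"
  shows "set_integrable lebesgue (g ` S) F"
    "set_integrable lebesgue S (\<lambda>x. \<bar>det (matrix (g' x))\<bar> * F (g x))"
    "(LINT y:g ` S|lebesgue. F y) = (LINT x:S|lebesgue. \<bar>det (matrix (g' x))\<bar> * F (g x))"
proof -
  note c = cov_real3[OF S der_g inj, of F]
  show 1: "set_integrable lebesgue (g ` S) F" "set_integrable lebesgue S (\<lambda>x. \<bar>det (matrix (g' x))\<bar> * F (g x))"
    using int c by blast+
  have "integral S (\<lambda>x. \<bar>det (matrix (g' x))\<bar> * F (g x)) = integral (g ` S) F"
    using c 1 by blast
  thus "(LINT y:g ` S|lebesgue. F y) = (LINT x:S|lebesgue. \<bar>det (matrix (g' x))\<bar> * F (g x))"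
    using set_lebesgue_integral_eq_integral(2)[OF 1(1)] set_lebesgue_integral_eq_integral(2)[OF 1(2)] by simp
qed

lemma spike_set:
  fixes f :: "real^3 \<Rightarrow> real"
  assumes "set_integrable lebesgue S f" "negligible (S - T)" "negligible (T - S)"
  shows "set_integrable lebesgue T f" "(LINT x:T|lebesgue. f x) = (LINT x:S|lebesgue. f x)"
proof -
  have n1: "negligible {x \<in> S - T. f x \<noteq> 0}" "negligible {x \<in> T - S. f x \<noteq> 0}"
    using assms(2,3) by (auto intro: negligible_subset)
  show T: "set_integrable lebesgue T f"
    using absolutely_integrable_spike_set_eq[OF n1] assms(1) by blast
  show "(LINT x:T|lebesgue. f x) = (LINT x:S|lebesgue. f x)"
    using set_lebesgue_integral_eq_integral(2)[OF T] set_lebesgue_integral_eq_integral(2)[OF assms(1)]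
      integral_spike_set[OF n1] by simp
qed




lemma set_int_k:
  fixes k :: "real^3 \<Rightarrow> real"
  assumes "integrable lebesgue k" "A \<in> sets lebesgue"
  shows "set_integrable lebesgue A k"
  unfolding set_integrable_def using integrable_mult_indicator[OF assms(2,1)] .

lemma zero_from_open:
  fixes k :: "real^3 \<Rightarrow> real"
  assumes k: "integrable lebesgue k"
    and op: "\<And>U. open U \<Longrightarrow> (LINT x:U|lebesgue. k x) = 0"
  shows "AE x in lebesgue. k x = 0"
proof -
  have bor: "(LINT x:C|lebesgue. k x) = 0" if "C \<in> sets borel" for C
  proof -
    have Cs: "C \<in> sigma_sets UNIV {S::(real^3) set. open S}" using that by (simp add: borel_def)
    have ist: "Int_stable {S::(real^3) set. open S}" by (auto simp: Int_stable_def)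
    have cl: "{S::(real^3) set. open S} \<subseteq> Pow UNIV" by simp
    show ?thesis
    proof (rule sigma_sets_induct_disjoint[OF ist cl Cs])
      fix A :: "(real^3) set" assume "A \<in> {S. open S}"
      thus "(LINT x:A|lebesgue. k x) = 0" using op by simp
    next
      show "(LINT x:{}|lebesgue. k x) = 0" by (simp add: set_lebesgue_integral_def)
    next
      fix A :: "(real^3) set"
      assume c1: "A \<in> sigma_sets UNIV {S. open S}" and c2: "(LINT x:A|lebesgue. k x) = 0"
      have Ab: "A \<in> sets borel" using c1 by (simp add: borel_def)
      hence Al: "A \<in> sets lebesgue" by auto
      have "(LINT x:(UNIV - A)|lebesgue. k x) = (LINT x:UNIV|lebesgue. k x) - (LINT x:A|lebesgue. k x)"
      proof -
        have "(LINT x:UNIV|lebesgue. k x) = (LINT x:(UNIV - A) \<union> A|lebesgue. k x)" by simp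
        also have "\<dots> = (LINT x:(UNIV - A)|lebesgue. k x) + (LINT x:A|lebesgue. k x)"
          by (rule set_integral_Un) (auto intro!: set_int_k k Al)
        finally show ?thesis by simp
      qed
      thus "(LINT x:(UNIV - A)|lebesgue. k x) = 0" using c2 op[of UNIV] by simp
    next
      fix A :: "nat \<Rightarrow> (real^3) set"
      assume u1: "disjoint_family A" and u2: "range A \<subseteq> sigma_sets UNIV {S. open S}"
        and u3: "\<And>i. (LINT x:A i|lebesgue. k x) = 0"
      have Al: "A i \<in> sets lebesgue" for i
      proof -
        have "A i \<in> sigma_sets UNIV {S. open S}" using u2 by blast
        hence "A i \<in> sets borel" by (simp add: borel_def)
        thus ?thesis by auto
      qed
      have "(LINT x:(\<Union>i. A i)|lebesgue. k x) = (\<Sum>i. (LINT x:(A i)|lebesgue. k x))"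
        apply (rule lebesgue_integral_countable_add)
        using Al u1 by (auto intro!: set_int_k k simp: disjoint_family_on_def)
      thus "(LINT x:(\<Union>i. A i)|lebesgue. k x) = 0" using u3 by simp
    qed
  qed
  have all: "(LINT x:A|lebesgue. k x) = 0" if Aleb: "A \<in> sets lebesgue" for A
  proof -
    obtain C T where C: "fsigma C" "T \<in> null_sets lebesgue" "C \<union> T = A" "disjnt C T"
      using lebesgue_set_almost_fsigma[OF Aleb] by metis
    from C(1) obtain F where F: "\<And>n::nat. closed (F n)" "C = \<Union>(F ` UNIV)"
      by (metis fsigma.cases)
    have Cb: "C \<in> sets borel" using F by auto
    hence Cl: "C \<in> sets lebesgue" by auto
    have "(LINT x:A|lebesgue. k x) = (LINT x:C|lebesgue. k x)"
    proof (rule set_integral_cong_set)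
      show "set_borel_measurable lebesgue C k" "set_borel_measurable lebesgue A k"
        using set_int_k[OF k] Cl Aleb by (auto simp: set_borel_measurable_def set_integrable_def)
      show "AE x in lebesgue. (x \<in> C) = (x \<in> A)"
        using AE_not_in[OF C(2)] by eventually_elim (use C(3) in auto)
    qed
    thus ?thesis using bor[OF Cb] by simp
  qed
  have "AE x in lebesgue. k x = (\<lambda>x. 0::real) x"
    by (rule density_unique_real[OF k]) (use all in \<open>auto simp: set_lebesgue_integral_def\<close>)
  thus ?thesis by simp
qed




definition Qv :: "(real^3) set" where "Qv = {a. \<forall>i\<in>Basis. a \<bullet> i \<in> \<rat>}"
definition ratbox :: "(real^3) set set" where "ratbox = (\<lambda>(a,b). box a b) ` (Qv \<times> Qv)"
definition fam :: "(real^3) set set" where "fam = (\<lambda>l. \<Union>(set l)) ` lists ratbox"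

lemma countable_Qv: "countable Qv"
proof -
  have "Qv \<subseteq> (\<lambda>f. \<Sum>i\<in>Basis. f i *\<^sub>R i) ` (PiE Basis (\<lambda>_. \<rat>))"
  proof
    fix a assume "a \<in> Qv"
    hence "restrict (\<lambda>i. a \<bullet> i) Basis \<in> PiE Basis (\<lambda>_. \<rat>)" by (auto simp: Qv_def)
    moreover have "a = (\<Sum>i\<in>Basis. restrict (\<lambda>i. a \<bullet> i) Basis i *\<^sub>R i)"
      by (simp add: euclidean_representation)
    ultimately show "a \<in> (\<lambda>f. \<Sum>i\<in>Basis. f i *\<^sub>R i) ` (PiE Basis (\<lambda>_. \<rat>))" by blast
  qed
  moreover have "countable (PiE (Basis::(real^3) set) (\<lambda>_. \<rat>))"
    by (rule countable_PiE) (auto intro: countable_rat)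
  ultimately show ?thesis using countable_image countable_subset by blast
qed

lemma countable_fam: "countable fam"
  unfolding fam_def ratbox_def using countable_Qv by auto

lemma empty_fam: "{} \<in> fam"
  unfolding fam_def by (rule image_eqI[of _ _ "[]"]) auto

lemma ratbox_open: "b \<in> ratbox \<Longrightarrow> open b"
  unfolding ratbox_def by auto

lemma fam_open: "U \<in> fam \<Longrightarrow> open U"
  unfolding fam_def using ratbox_open by (auto intro!: open_Union)

lemma open_fam_approx:
  assumes "open U"
  shows "\<exists>B. incseq B \<and> (\<forall>n. B n \<in> fam \<and> B n \<subseteq> U) \<and> (\<Union>n. B n) = U"
proof -
  define S where "S = {b \<in> ratbox. b \<subseteq> U}"
  have "countable ratbox" unfolding ratbox_def using countable_Qv by auto
  hence cS: "countable S" unfolding S_def by (rule countable_subset[rotated]) auto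
  have US: "U = \<Union>S"
  proof
    show "U \<subseteq> \<Union>S"
    proof
      fix x assume "x \<in> U"
      then obtain e where "e > 0" "ball x e \<subseteq> U" using assms openE by blast
      then obtain a b where ab: "\<forall>i\<in>Basis. a \<bullet> i \<in> \<rat> \<and> b \<bullet> i \<in> \<rat>" "x \<in> box a b" "box a b \<subseteq> ball x e"
        using rational_boxes[of e x] by blast
      have "box a b \<in> ratbox" using ab(1) by (auto simp: ratbox_def Qv_def)
      thus "x \<in> \<Union>S" using ab \<open>ball x e \<subseteq> U\<close> S_def by blast
    qed
  qed (auto simp: S_def)
  show ?thesis
  proof (cases "S = {}")
    case True
    thus ?thesis using US empty_fam by (intro exI[of _ "\<lambda>_. {}"]) (auto simp: incseq_def)
  next
    case False
    define e where "e = from_nat_into S"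
    have re: "range e = S" using range_from_nat_into[OF False cS] e_def by simp
    define B where "B = (\<lambda>n. \<Union>(e ` {..n}))"
    have "incseq B" unfolding B_def incseq_def by (auto intro: order_trans)
    moreover have "B n \<in> fam" for n
    proof -
      have "set [0..<Suc n] = {..n}" by auto
      hence "set (map e [0..<Suc n]) = e ` {..n}" by (simp only: set_map)
      moreover have "e i \<in> ratbox" for i using re S_def by blast
      hence "map e [0..<Suc n] \<in> lists ratbox" by auto
      ultimately show ?thesis unfolding fam_def B_def by (metis image_eqI)
    qed
    moreover have "B n \<subseteq> U" for n using re S_def B_def by auto
    moreover have "(\<Union>n. B n) = U"
    proof
      show "(\<Union>n. B n) \<subseteq> U" using \<open>\<And>n. B n \<subseteq> U\<close> by blast
      show "U \<subseteq> (\<Union>n. B n)"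
      proof
        fix x assume "x \<in> U"
        then obtain b where "b \<in> S" "x \<in> b" using US by blast
        then obtain n where "e n = b" using re by blast
        thus "x \<in> (\<Union>n. B n)" using \<open>x \<in> b\<close> B_def by blast
      qed
    qed
    ultimately show ?thesis by blast
  qed
qed




lemma zero_from_fam:
  fixes k :: "real^3 \<Rightarrow> real"
  assumes k: "integrable lebesgue k" and V: "open V" and out: "\<And>x. x \<notin> V \<Longrightarrow> k x = 0"
    and fam0: "\<And>U. U \<in> fam \<Longrightarrow> U \<subseteq> V \<Longrightarrow> (LINT x:U|lebesgue. k x) = 0"
  shows "AE x in lebesgue. k x = 0"
proof (rule zero_from_open[OF k])
  fix U :: "(real^3) set" assume "open U"
  hence UV: "open (U \<inter> V)" using V by blast
  have "(LINT x:U|lebesgue. k x) = (LINT x:U \<inter> V|lebesgue. k x)"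
    unfolding set_lebesgue_integral_def
    by (rule Bochner_Integration.integral_cong) (auto simp: indicator_def out)
  moreover obtain B where B: "incseq B" "\<And>n. B n \<in> fam" "\<And>n. B n \<subseteq> U \<inter> V" "(\<Union>n. B n) = U \<inter> V"
    using open_fam_approx[OF UV] by blast
  have "(\<lambda>n. LINT x:B n|lebesgue. k x) \<longlonglongrightarrow> (LINT x:(\<Union>n. B n)|lebesgue. k x)"
  proof (rule set_integral_cont_up)
    show "B i \<in> sets lebesgue" for i using fam_open[OF B(2)] by auto
    show "incseq B" by fact
    show "set_integrable lebesgue (\<Union>n. B n) k"
      using set_int_k[OF k] B(4) UV by auto
  qed
  moreover have "(\<lambda>n. LINT x:B n|lebesgue. k x) = (\<lambda>n. 0)"
    using fam0 B by auto
  ultimately show "(LINT x:U|lebesgue. k x) = 0"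
    using B(4) LIMSEQ_unique tendsto_const by metis
qed

lemma set_int_cong_AE':
  fixes u v :: "real^3 \<Rightarrow> real"
  assumes u: "set_integrable lebesgue T u"
    and mv: "(\<lambda>x. indicator T x *\<^sub>R v x) \<in> borel_measurable lebesgue"
    and ae: "AE x in lebesgue. x \<in> T \<longrightarrow> u x = v x"
  shows "set_integrable lebesgue T v" "(LINT x:T|lebesgue. v x) = (LINT x:T|lebesgue. u x)"
proof -
  have mu: "(\<lambda>x. indicator T x *\<^sub>R u x) \<in> borel_measurable lebesgue"
    using u unfolding set_integrable_def by auto
  have ae': "AE x in lebesgue. indicator T x *\<^sub>R u x = indicator T x *\<^sub>R v x"
    using ae by eventually_elim (auto simp: indicator_def)
  show "set_integrable lebesgue T v"
    using u integrable_cong_AE[OF mu mv ae'] unfolding set_integrable_def by blast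
  show "(LINT x:T|lebesgue. v x) = (LINT x:T|lebesgue. u x)"
    unfolding set_lebesgue_integral_def using integral_cong_AE[OF mu mv ae'] by simp
qed




lemma region:
  fixes \<psi> :: "real^3 \<Rightarrow> real^3" and \<rho> \<rho>0 f F :: "real^3 \<Rightarrow> real"
    and D :: "real^3 \<Rightarrow> real^3 \<Rightarrow> real^3"
  assumes V: "open V" "bounded V"
    and inj: "inj_on \<psi> V"
    and lip: "L-lipschitz_on V \<psi>"
    and Z: "Z \<in> null_sets lebesgue"
    and der: "\<And>x. x \<in> V - Z \<Longrightarrow> (\<psi> has_derivative D x) (at x)"
    and \<rho>: "in_Linf W \<rho>" "\<psi> ` V \<subseteq> W"
    and \<rho>0: "in_Linf W0 \<rho>0" "V \<subseteq> W0"
    and mass: "\<And>U. U \<in> fam \<Longrightarrow> U \<subseteq> V \<Longrightarrow>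
                 (LINT y:\<psi> ` U|lebesgue. \<rho> y) = (LINT x:U|lebesgue. \<rho>0 x)"
    and A: "A \<subseteq> V" "A \<in> sets lebesgue"
    and f: "in_Linf W1 f" "A \<subseteq> W1"
    and F: "\<And>x. x \<in> A \<Longrightarrow> F (\<psi> x) = f x"
  shows "set_integrable lebesgue (\<psi> ` A) (\<lambda>y. F y * \<rho> y)"
    "(LINT y:\<psi> ` A|lebesgue. F y * \<rho> y) = (LINT x:A|lebesgue. f x * \<rho>0 x)"
    "\<psi> ` A \<in> sets lebesgue"
proof -
  define S0 where "S0 = V - Z"
  have Vl: "V \<in> sets lebesgue" using V by auto
  have Zl: "Z \<in> sets lebesgue" using Z by auto
  have nZ: "negligible Z" using Z by (simp add: negligible_iff_null_sets)
  have S0l: "S0 \<in> sets lebesgue" using Vl Zl by (auto simp: S0_def)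
  have derE: "(\<psi> has_derivative D x) (at x within E)" if "E \<subseteq> S0" "x \<in> E" for E x
    using der[of x] that has_derivative_at_withinI S0_def by blast
  have injE: "inj_on \<psi> E" if "E \<subseteq> V" for E using inj inj_on_subset that by blast
  have negimg: "negligible (\<psi> ` (E \<inter> Z))" if EV: "E \<subseteq> V" for E
  proof (rule negligible_locally_Lipschitz_image)
    show "DIM(real^3) \<le> DIM(real^3)" by simp
    show "negligible (E \<inter> Z)" by (rule negligible_subset[OF nZ]) auto
    fix x assume x: "x \<in> E \<inter> Z"
    show "\<exists>T B. open T \<and> x \<in> T \<and> (\<forall>y\<in>E \<inter> Z \<inter> T. norm (\<psi> y - \<psi> x) \<le> B * norm (y - x))"
    proof (intro exI[of _ UNIV] exI[of _ L] conjI ballI)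
      fix y assume "y \<in> E \<inter> Z \<inter> UNIV"
      thus "norm (\<psi> y - \<psi> x) \<le> L * norm (y - x)"
        using lip EV x unfolding lipschitz_on_def dist_norm by blast
    qed auto
  qed
  have bndimg: "bounded (\<psi> ` V)"
    using bounded_uniformly_continuous_image lipschitz_on_uniformly_continuous lip V(2) by blast
  have measimg: "\<psi> ` E \<in> sets lebesgue" if "E \<subseteq> S0" "E \<in> sets lebesgue" for E
  proof (rule differentiable_image_in_sets_lebesgue[OF that(2)])
    show "DIM(real^3) \<le> DIM(real^3)" by simp
    show "\<psi> differentiable_on E"
      unfolding differentiable_on_def differentiable_def using derE[OF that(1)] by blast
  qed
  have spikeimg: "negligible (\<psi> ` E - \<psi> ` (E \<inter> S0))" "negligible (\<psi> ` (E \<inter> S0) - \<psi> ` E)"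
    if "E \<subseteq> V" for E
  proof -
    have "\<psi> ` E - \<psi> ` (E \<inter> S0) \<subseteq> \<psi> ` (E \<inter> Z)" using that S0_def by auto
    thus "negligible (\<psi> ` E - \<psi> ` (E \<inter> S0))" by (rule negligible_subset[OF negimg[OF that]])
    have "\<psi> ` (E \<inter> S0) - \<psi> ` E = {}" by auto
    thus "negligible (\<psi> ` (E \<inter> S0) - \<psi> ` E)" by simp
  qed
  have spikedom: "negligible (E - E \<inter> S0)" "negligible (E \<inter> S0 - E)" if "E \<subseteq> V" for E
  proof -
    have "E - E \<inter> S0 \<subseteq> Z" using that S0_def by auto
    thus "negligible (E - E \<inter> S0)" by (rule negligible_subset[OF nZ])
    have "E \<inter> S0 - E = {}" by auto
    thus "negligible (E \<inter> S0 - E)" by simp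
  qed
  define g1 where "g1 = (\<lambda>x. \<bar>det (matrix (D x))\<bar> * \<rho> (\<psi> x))"
  have stepA: "set_integrable lebesgue (E \<inter> S0) g1 \<and>
      (LINT y:\<psi> ` E|lebesgue. \<rho> y) = (LINT x:E \<inter> S0|lebesgue. g1 x)"
    if E: "E \<subseteq> V" "E \<in> sets lebesgue" for E
  proof -
    have ES: "E \<inter> S0 \<subseteq> S0" "E \<inter> S0 \<in> sets lebesgue" using E S0l by auto
    have ESV: "E \<inter> S0 \<subseteq> V" using S0_def by auto
    have mi: "\<psi> ` (E \<inter> S0) \<in> sets lebesgue" using measimg ES by blast
    have sub: "\<psi> ` (E \<inter> S0) \<subseteq> \<psi> ` V" using ESV by auto
    have ri: "set_integrable lebesgue (\<psi> ` (E \<inter> S0)) \<rho>"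
    proof (rule Linf_int[OF Linf_sub[OF \<rho>(1)] mi])
      show "\<psi> ` (E \<inter> S0) \<subseteq> W" using sub \<rho>(2) by blast
      show "bounded (\<psi> ` (E \<inter> S0))" using sub bndimg bounded_subset by blast
    qed
    have c: "set_integrable lebesgue (E \<inter> S0) (\<lambda>x. \<bar>det (matrix (D x))\<bar> * \<rho> (\<psi> x))"
       "(LINT y:\<psi> ` (E \<inter> S0)|lebesgue. \<rho> y) = (LINT x:E \<inter> S0|lebesgue. \<bar>det (matrix (D x))\<bar> * \<rho> (\<psi> x))"
      using cov_set[OF ES(2) derE[OF ES(1)] injE[OF ESV], of \<rho>] ri by blast+
    have "(LINT y:\<psi> ` E|lebesgue. \<rho> y) = (LINT y:\<psi> ` (E \<inter> S0)|lebesgue. \<rho> y)"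
      using spike_set(2)[OF ri spikeimg(2)[OF E(1)] spikeimg(1)[OF E(1)]] .
    thus ?thesis using c unfolding g1_def by simp
  qed
  have S0V: "S0 \<subseteq> V" using S0_def by auto
  have bS0: "bounded S0" using S0V V(2) bounded_subset by blast
  have g1S0: "set_integrable lebesgue S0 g1"
  proof -
    have "V \<inter> S0 = S0" using S0V by auto
    thus ?thesis using stepA[OF order_refl Vl] by simp
  qed
  have r0int: "set_integrable lebesgue E \<rho>0" if "E \<subseteq> V" "E \<in> sets lebesgue" for E
    by (rule Linf_int[OF Linf_sub[OF \<rho>0(1)] that(2)])
       (use that \<rho>0(2) V(2) bounded_subset in blast)+
  have r0S0: "set_integrable lebesgue S0 \<rho>0" using r0int[OF S0V S0l] .
  define k where "k = (\<lambda>x. indicator S0 x *\<^sub>R (g1 x - \<rho>0 x))"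
  have kint: "integrable lebesgue k"
    using set_integral_diff(1)[OF g1S0 r0S0] unfolding set_integrable_def k_def .
  have kout: "k x = 0" if "x \<notin> V" for x using that S0V by (auto simp: k_def indicator_def)
  have kfam: "(LINT x:U|lebesgue. k x) = 0" if U: "U \<in> fam" "U \<subseteq> V" for U
  proof -
    have Ul: "U \<in> sets lebesgue" using fam_open[OF U(1)] by auto
    have USl: "U \<inter> S0 \<in> sets lebesgue" using Ul S0l by auto
    have USV: "U \<inter> S0 \<subseteq> V" using U by auto
    have "(LINT x:U|lebesgue. k x) = (LINT x:U \<inter> S0|lebesgue. g1 x - \<rho>0 x)"
      unfolding set_lebesgue_integral_def k_def
      by (rule Bochner_Integration.integral_cong) (auto simp: indicator_def)
    also have "\<dots> = (LINT x:U \<inter> S0|lebesgue. g1 x) - (LINT x:U \<inter> S0|lebesgue. \<rho>0 x)"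
      using stepA[OF U(2) Ul] r0int[OF USV USl] by (intro set_integral_diff(2)) auto
    also have "(LINT x:U \<inter> S0|lebesgue. g1 x) = (LINT x:U|lebesgue. \<rho>0 x)"
      using stepA[OF U(2) Ul] mass[OF U] by simp
    also have "(LINT x:U|lebesgue. \<rho>0 x) = (LINT x:U \<inter> S0|lebesgue. \<rho>0 x)"
      using spike_set(2)[OF r0int[OF U(2) Ul] spikedom(1)[OF U(2)] spikedom(2)[OF U(2)]] by simp
    finally show ?thesis by simp
  qed
  have AEk: "AE x in lebesgue. k x = 0"
    by (rule zero_from_fam[OF kint V(1) kout kfam])
  have AEg: "AE x in lebesgue. x \<in> S0 \<longrightarrow> g1 x = \<rho>0 x"
    using AEk by eventually_elim (auto simp: k_def)
  have AS: "A \<inter> S0 \<subseteq> S0" "A \<inter> S0 \<in> sets lebesgue" "A \<inter> S0 \<subseteq> V" using A S0l by auto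
  have bAS: "bounded (A \<inter> S0)" using AS(3) V(2) bounded_subset by blast
  have fr: "set_integrable lebesgue (A \<inter> S0) (\<lambda>x. f x * \<rho>0 x)"
  proof (rule Linf_int[OF Linf_mult[OF Linf_sub[OF f(1)] Linf_sub[OF \<rho>0(1)]] AS(2) bAS])
    show "A \<inter> S0 \<subseteq> W1" using f(2) by blast
    show "A \<inter> S0 \<subseteq> W0" using AS(3) \<rho>0(2) by blast
  qed
  define G where "G = (\<lambda>x. \<bar>det (matrix (D x))\<bar> * (F (\<psi> x) * \<rho> (\<psi> x)))"
  have mA: "(\<lambda>x. if x \<in> A then f x else 0) \<in> borel_measurable lebesgue"
  proof -
    have "in_Linf A f" using Linf_sub[OF f] .
    hence "f \<in> borel_measurable (lebesgue_on A)" unfolding in_Linf_def by blast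
    thus ?thesis using borel_measurable_if[OF A(2)] by blast
  qed
  have mS: "(\<lambda>x. indicator S0 x *\<^sub>R g1 x) \<in> borel_measurable lebesgue"
    using g1S0 unfolding set_integrable_def by auto
  have mv: "(\<lambda>x. indicator (A \<inter> S0) x *\<^sub>R G x) \<in> borel_measurable lebesgue"
  proof -
    have "(\<lambda>x. indicator (A \<inter> S0) x *\<^sub>R G x) =
          (\<lambda>x. (if x \<in> A then f x else 0) * (indicator S0 x *\<^sub>R g1 x))"
      by (rule ext) (auto simp: indicator_def G_def g1_def F)
    thus ?thesis using mA mS by simp
  qed
  have ae: "AE x in lebesgue. x \<in> A \<inter> S0 \<longrightarrow> f x * \<rho>0 x = G x"
    using AEg by eventually_elim (auto simp: G_def g1_def F)
  note GA = set_int_cong_AE'[OF fr mv ae]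
  have cv: "set_integrable lebesgue (\<psi> ` (A \<inter> S0)) (\<lambda>y. F y * \<rho> y)"
      "(LINT y:\<psi> ` (A \<inter> S0)|lebesgue. F y * \<rho> y) = (LINT x:A \<inter> S0|lebesgue. G x)"
    using cov_set[OF AS(2) derE[OF AS(1)] injE[OF AS(3)], of "\<lambda>y. F y * \<rho> y"] GA(1)
    unfolding G_def by blast+
  have "\<psi> ` (A \<inter> S0) \<in> sets lebesgue" using measimg AS by blast
  moreover have "\<psi> ` A - \<psi> ` (A \<inter> S0) \<in> sets lebesgue"
    using spikeimg(1)[OF A(1)] negligible_imp_sets by blast
  moreover have "\<psi> ` A = \<psi> ` (A \<inter> S0) \<union> (\<psi> ` A - \<psi> ` (A \<inter> S0))" by auto
  ultimately show "\<psi> ` A \<in> sets lebesgue" by (metis sets.Un)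
  note sp = spike_set[OF cv(1) spikeimg(2)[OF A(1)] spikeimg(1)[OF A(1)]]
  show "set_integrable lebesgue (\<psi> ` A) (\<lambda>y. F y * \<rho> y)" using sp(1) .
  have "(LINT x:A|lebesgue. f x * \<rho>0 x) = (LINT x:A \<inter> S0|lebesgue. f x * \<rho>0 x)"
    using spike_set(2)[OF fr spikedom(2)[OF A(1)] spikedom(1)[OF A(1)]] by simp
  thus "(LINT y:\<psi> ` A|lebesgue. F y * \<rho> y) = (LINT x:A|lebesgue. f x * \<rho>0 x)"
    using sp(2) cv(2) GA(2) by simp
qed




lemma lip_slice:
  fixes \<psi> :: "real \<Rightarrow> real^3 \<Rightarrow> real^3"
  assumes "L-lipschitz_on (S \<times> I) (\<lambda>(x, t). \<psi> t x)" "t \<in> I"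
  shows "L-lipschitz_on S (\<psi> t)"
  unfolding lipschitz_on_def
proof (intro conjI ballI)
  show "0 \<le> L" using assms(1) lipschitz_on_def by blast
  fix a b assume "a \<in> S" "b \<in> S"
  hence "dist ((\<lambda>(x, t). \<psi> t x) (a, t)) ((\<lambda>(x, t). \<psi> t x) (b, t)) \<le> L * dist (a, t) (b, t)"
    using assms unfolding lipschitz_on_def by blast
  thus "dist (\<psi> t a) (\<psi> t b) \<le> L * dist a b" by (simp add: dist_Pair_Pair)
qed

lemma reg_unpack:
  fixes \<psi> :: "real \<Rightarrow> real^3 \<Rightarrow> real^3"
  assumes "reg_lip_pos V I t0 \<psi>" "t \<in> I"
  shows "\<exists>L. L-lipschitz_on (closure V) (\<psi> t)" "open (\<psi> t ` V)" "inj_on (\<psi> t) (closure V)"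
    "\<exists>Z D. Z \<in> null_sets lebesgue \<and> (\<forall>x\<in>V - Z. (\<psi> t has_derivative D x) (at x))"
proof -
  from assms(1) obtain L where L: "L-lipschitz_on (closure V \<times> I) (\<lambda>(x, t). \<psi> t x)"
    unfolding reg_lip_pos_def by blast
  show "\<exists>L. L-lipschitz_on (closure V) (\<psi> t)" using lip_slice[OF L assms(2)] by blast
  show "open (\<psi> t ` V)" "inj_on (\<psi> t) (closure V)"
    using assms unfolding reg_lip_pos_def by blast+
  have "AE x in lebesgue. x \<in> V \<longrightarrow> (\<exists>D. (\<psi> t has_derivative D) (at x) \<and> det (matrix D) > 0)"
    using assms unfolding reg_lip_pos_def by blast
  then obtain N where N: "{x \<in> space lebesgue. \<not> (x \<in> V \<longrightarrow> (\<exists>D. (\<psi> t has_derivative D) (at x) \<and> det (matrix D) > 0))} \<subseteq> N"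
    "emeasure lebesgue N = 0" "N \<in> sets lebesgue"
    by (rule AE_E)
  define D where "D x = (SOME D. (\<psi> t has_derivative D) (at x))" for x
  have "(\<psi> t has_derivative D x) (at x)" if "x \<in> V - N" for x
  proof -
    have "\<exists>D. (\<psi> t has_derivative D) (at x)" using N(1) that by auto
    thus ?thesis unfolding D_def by (rule someI_ex)
  qed
  moreover have "N \<in> null_sets lebesgue" using N by auto
  ultimately show "\<exists>Z D. Z \<in> null_sets lebesgue \<and> (\<forall>x\<in>V - Z. (\<psi> t has_derivative D x) (at x))"
    by blast
qed

lemma lip_neg:
  fixes g :: "real^3 \<Rightarrow> real^3"
  assumes L: "L-lipschitz_on S g" and N: "negligible N" "N \<subseteq> S"
  shows "negligible (g ` N)"
proof (rule negligible_locally_Lipschitz_image)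
  show "DIM(real^3) \<le> DIM(real^3)" by simp
  show "negligible N" by fact
  fix x assume x: "x \<in> N"
  show "\<exists>T B. open T \<and> x \<in> T \<and> (\<forall>y\<in>N \<inter> T. norm (g y - g x) \<le> B * norm (y - x))"
  proof (intro exI[of _ UNIV] exI[of _ L] conjI ballI)
    fix y assume "y \<in> N \<inter> UNIV"
    thus "norm (g y - g x) \<le> L * norm (y - x)"
      using L N x unfolding lipschitz_on_def dist_norm by blast
  qed auto
qed

lemma uniq_pre:
  fixes \<phi> \<psi> \<kappa> :: "real^3 \<Rightarrow> real^3"
  assumes x: "x \<in> P" and x': "x' \<in> Bc" and eq: "\<phi> x' = \<phi> x"
    and aP: "\<forall>y\<in>P. \<phi> y = \<psi> y" and aQ: "\<forall>y\<in>Q. \<phi> y = \<kappa> y"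
    and injP: "inj_on \<psi> (closure P)" and disj: "\<phi> ` P \<inter> \<phi> ` Q = {}"
    and opP: "open (\<psi> ` P)" and contQ: "continuous_on (closure Q) \<kappa>"
    and rest: "\<forall>y\<in>Bc - (P \<union> Q). (y \<in> closure P \<and> \<phi> y = \<psi> y) \<or> (y \<in> closure Q \<and> \<phi> y = \<kappa> y)"
  shows "x' = x"
proof -
  have xc: "x \<in> closure P" using x closure_subset by blast
  have px: "\<phi> x = \<psi> x" using aP x by blast
  consider "x' \<in> P" | "x' \<in> Q" | "x' \<in> closure P \<and> \<phi> x' = \<psi> x'" | "x' \<in> closure Q \<and> \<phi> x' = \<kappa> x'"
    using rest x' by blast
  thus ?thesis
  proof cases
    case 1
    hence "\<psi> x' = \<psi> x" using aP eq px by metis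
    thus ?thesis using injP xc 1 closure_subset by (meson inj_onD subsetD)
  next
    case 2
    hence "\<phi> x \<in> \<phi> ` P \<inter> \<phi> ` Q" using x eq by (metis IntI imageI)
    thus ?thesis using disj by blast
  next
    case 3
    hence "\<psi> x' = \<psi> x" using eq px by simp
    thus ?thesis using injP xc 3 by (meson inj_onD)
  next
    case 4
    have "\<kappa> ` closure Q \<subseteq> closure (\<kappa> ` Q)"
      by (rule image_closure_subset[OF contQ closed_closure closure_subset])
    moreover have "\<kappa> ` Q = \<phi> ` Q" using aQ by (auto simp: image_def)
    moreover have "\<kappa> x' \<in> \<kappa> ` closure Q" using 4 by (intro imageI) blast
    ultimately have "\<kappa> x' \<in> closure (\<phi> ` Q)" by (metis subsetD)
    moreover have "\<kappa> x' = \<psi> x" using 4 eq px by simp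
    moreover have "\<psi> x \<in> \<psi> ` P" using x by blast
    moreover have "\<psi> ` P = \<phi> ` P" using aP by (auto simp: image_def)
    moreover have "\<psi> ` P \<inter> closure (\<phi> ` Q) = {}"
      using open_Int_closure_eq_empty[OF opP] disj \<open>\<psi> ` P = \<phi> ` P\<close> by simp
    ultimately show ?thesis by (metis IntI empty_iff)
  qed
qed

lemma inv_pre:
  assumes "x \<in> Bc" "\<And>x'. x' \<in> Bc \<Longrightarrow> \<phi> x' = \<phi> x \<Longrightarrow> x' = x"
  shows "inv_into Bc \<phi> (\<phi> x) = x"
  unfolding inv_into_def by (rule someI2[of _ x]) (use assms in auto)





theorem mainTheorem4:
  fixes B :: "(real^3) set" and KF KS :: "nat set" and VF VS :: "nat \<Rightarrow> (real^3) set"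
    and t0 t1 :: real and \<phi> :: "real \<Rightarrow> real^3 \<Rightarrow> real^3"
    and \<rho>s f :: "real \<Rightarrow> real^3 \<Rightarrow> real" and A :: "(real^3) set"
  assumes "composite_earth_model B KF VF KS VS"
    and "admissible B KF VF KS VS {t0..t1} t0 \<phi>"
    and "\<exists>N. N \<in> null_sets lebesgue \<and> t0 \<notin> N \<and>
           (\<forall>t\<in>{t0..t1} - N. in_Linf (\<phi> t ` B) (\<rho>s t))"
    and "mass_conserved (region_union KS VS) {t0..t1} t0 \<phi> \<rho>s"
    and "mass_conserved (region_union KF VF) {t0..t1} t0 \<phi> \<rho>s"
    and "\<forall>t\<in>{t0..t1}. in_Linf B (f t)"
    and "lipschitz_domain A" and "A \<subseteq> B"
  shows "AE t in lebesgue. t \<in> {t0..t1} \<longrightarrow>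
           (LINT y:\<phi> t ` A|lebesgue. f t (inv_into B (\<phi> t) y) * \<rho>s t y)
             = (LINT x:A|lebesgue. f t x * \<rho>s t0 (\<phi> t0 x))"
proof -
  define I where "I = {t0..t1}"
  define BS where "BS = region_union KS VS"
  define BF where "BF = region_union KF VF"
  note c = assms(1)[unfolded composite_earth_model_def]
  have cemL: "lipschitz_domain B" using c[THEN conjunct1] .
  have cemKF: "finite KF" using c[THEN conjunct2, THEN conjunct1] .
  have cemKS: "finite KS" using c[THEN conjunct2, THEN conjunct2, THEN conjunct1] .
  have cemVF: "\<forall>k\<in>KF. lipschitz_domain (VF k)"
    using c[THEN conjunct2, THEN conjunct2, THEN conjunct2, THEN conjunct1] .
  have cemVS: "\<forall>k\<in>KS. lipschitz_domain (VS k)"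
    using c[THEN conjunct2, THEN conjunct2, THEN conjunct2, THEN conjunct2, THEN conjunct1] .
  have cemB: "B = (\<Union>k\<in>KF. VF k) \<union> (\<Union>k\<in>KS. VS k) \<union> interior_boundary B KF VF KS VS"
    using c[THEN conjunct2, THEN conjunct2, THEN conjunct2, THEN conjunct2, THEN conjunct2,
            THEN conjunct2, THEN conjunct2, THEN conjunct2] .
  have Bo: "open B" "bounded B" using cemL lipschitz_domain_def by blast+
  have Ao: "open A" "bounded A" using assms(7) lipschitz_domain_def by blast+
  have AB: "A \<subseteq> B" by fact
  have BSo: "open BS" "open BF" unfolding BS_def BF_def region_union_def by auto
  note d = assms(2)[unfolded admissible_def Let_def, folded BS_def BF_def I_def]
  have adm0: "\<forall>x\<in>B. \<phi> t0 x = x" using d[THEN conjunct2, THEN conjunct1] .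
  have disj: "\<forall>t\<in>I. \<phi> t ` BS \<inter> \<phi> t ` BF = {}"
    using d[THEN conjunct2, THEN conjunct2, THEN conjunct2, THEN conjunct2, THEN conjunct1] .
  have adm: "\<exists>\<psi>S \<psi>F. reg_lip_pos BS I t0 \<psi>S \<and> reg_lip_pos BF I t0 \<psi>F \<and>
        (\<forall>t\<in>I. \<forall>x\<in>BS. \<phi> t x = \<psi>S t x) \<and>
        (\<forall>t\<in>I. \<forall>x\<in>BF. \<phi> t x = \<psi>F t x) \<and>
        (\<forall>t\<in>I. \<forall>x\<in>closure B - (BS \<union> BF).
           (x \<in> closure BS \<and> \<phi> t x = \<psi>S t x) \<or> (x \<in> closure BF \<and> \<phi> t x = \<psi>F t x))"
    using d[THEN conjunct2, THEN conjunct2, THEN conjunct2, THEN conjunct2, THEN conjunct2] by blast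
  then obtain \<psi>S \<psi>F where rS: "reg_lip_pos BS I t0 \<psi>S" and rF: "reg_lip_pos BF I t0 \<psi>F"
    and aS: "\<forall>t\<in>I. \<forall>x\<in>BS. \<phi> t x = \<psi>S t x" and aF: "\<forall>t\<in>I. \<forall>x\<in>BF. \<phi> t x = \<psi>F t x"
    and rest: "\<forall>t\<in>I. \<forall>x\<in>closure B - (BS \<union> BF).
           (x \<in> closure BS \<and> \<phi> t x = \<psi>S t x) \<or> (x \<in> closure BF \<and> \<phi> t x = \<psi>F t x)"
    by blast
  obtain N0 where N0: "N0 \<in> null_sets lebesgue" "t0 \<notin> N0" "\<forall>t\<in>I - N0. in_Linf (\<phi> t ` B) (\<rho>s t)"
    using assms(3) I_def by blast
  define P where "P = (\<lambda>U N. N \<in> null_sets lebesgue \<and> t0 \<notin> N \<and>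
           (\<forall>t'\<in>I - N. \<forall>t''\<in>I - N.
              (LINT y:\<phi> t' ` U|lebesgue. \<rho>s t' y) = (LINT y:\<phi> t'' ` U|lebesgue. \<rho>s t'' y)))"
  define MS where "MS = {U \<in> fam. U \<subseteq> BS}"
  define MF where "MF = {U \<in> fam. U \<subseteq> BF}"
  have "\<forall>U\<in>MS. \<exists>N. P U N"
    using assms(4) fam_open unfolding mass_conserved_def MS_def P_def BS_def I_def by blast
  then obtain NS where NS: "\<And>U. U \<in> MS \<Longrightarrow> P U (NS U)" using bchoice by metis
  have "\<forall>U\<in>MF. \<exists>N. P U N"
    using assms(5) fam_open unfolding mass_conserved_def MF_def P_def BF_def I_def by blast
  then obtain NF where NF: "\<And>U. U \<in> MF \<Longrightarrow> P U (NF U)" using bchoice by metis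
  define Ntot where "Ntot = N0 \<union> (\<Union>U\<in>MS. NS U) \<union> (\<Union>U\<in>MF. NF U)"
  have cMS: "countable MS" "countable MF"
    using countable_fam unfolding MS_def MF_def by (auto intro: countable_subset[rotated])
  have Nnull: "Ntot \<in> null_sets lebesgue"
    unfolding Ntot_def using N0(1) NS NF cMS unfolding P_def
    by (intro null_sets.Un null_sets_UN') auto
  have key: "(LINT y:\<phi> t ` A|lebesgue. f t (inv_into B (\<phi> t) y) * \<rho>s t y)
             = (LINT x:A|lebesgue. f t x * \<rho>s t0 (\<phi> t0 x))"
    if tI: "t \<in> I" and tN: "t \<notin> Ntot" for t
  proof -
    have t0t: "t0 \<le> t" using tI I_def by auto
    have t0I: "t0 \<in> I" using tI I_def by auto
    have tN0: "t \<notin> N0" using tN Ntot_def by blast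
    have \<rho>t: "in_Linf (\<phi> t ` B) (\<rho>s t)" using N0(3) tI tN0 by blast
    have img0: "\<phi> t0 ` U = U" if "U \<subseteq> B" for U
    proof -
      have "\<phi> t0 ` U = (\<lambda>x. x) ` U" by (rule image_cong) (use that adm0 in auto)
      thus ?thesis by simp
    qed
    have \<rho>0: "in_Linf B (\<rho>s t0)"
    proof -
      have "in_Linf (\<phi> t0 ` B) (\<rho>s t0)" using N0(3) t0I N0(2) by blast
      thus ?thesis using img0[of B] by simp
    qed
    have ft: "in_Linf B (f t)" using assms(6) tI I_def by blast
    obtain LS where LS: "LS-lipschitz_on (closure BS) (\<psi>S t)" using reg_unpack(1)[OF rS tI] by blast
    obtain LF where LF: "LF-lipschitz_on (closure BF) (\<psi>F t)" using reg_unpack(1)[OF rF tI] by blast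
    have opS: "open (\<psi>S t ` BS)" and injS: "inj_on (\<psi>S t) (closure BS)"
      using reg_unpack(2,3)[OF rS tI] by blast+
    have opF: "open (\<psi>F t ` BF)" and injF: "inj_on (\<psi>F t) (closure BF)"
      using reg_unpack(2,3)[OF rF tI] by blast+
    obtain ZS DS where ZS: "ZS \<in> null_sets lebesgue" "\<forall>x\<in>BS - ZS. (\<psi>S t has_derivative DS x) (at x)"
      using reg_unpack(4)[OF rS tI] by blast
    obtain ZF DF where ZF: "ZF \<in> null_sets lebesgue" "\<forall>x\<in>BF - ZF. (\<psi>F t has_derivative DF x) (at x)"
      using reg_unpack(4)[OF rF tI] by blast
    have contS: "continuous_on (closure BS) (\<psi>S t)" using LS lipschitz_on_continuous_on by blast
    have contF: "continuous_on (closure BF) (\<psi>F t)" using LF lipschitz_on_continuous_on by blast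
    have aSt: "\<forall>x\<in>BS. \<phi> t x = \<psi>S t x" using aS tI by blast
    have aFt: "\<forall>x\<in>BF. \<phi> t x = \<psi>F t x" using aF tI by blast
    have disjt: "\<phi> t ` BS \<inter> \<phi> t ` BF = {}" using disj tI by blast
    have disjt': "\<phi> t ` BF \<inter> \<phi> t ` BS = {}" using disjt by blast
    have restt: "\<forall>y\<in>B - (BS \<union> BF). (y \<in> closure BS \<and> \<phi> t y = \<psi>S t y) \<or> (y \<in> closure BF \<and> \<phi> t y = \<psi>F t y)"
      using rest tI closure_subset[of B] by blast
    have restt': "\<forall>y\<in>B - (BF \<union> BS). (y \<in> closure BF \<and> \<phi> t y = \<psi>F t y) \<or> (y \<in> closure BS \<and> \<phi> t y = \<psi>S t y)"
      using restt by blast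
    have BSBF: "BS \<inter> BF = {}"
    proof (rule ccontr)
      assume "BS \<inter> BF \<noteq> {}"
      then obtain x where "x \<in> BS" "x \<in> BF" by blast
      hence "\<phi> t x \<in> \<phi> t ` BS \<inter> \<phi> t ` BF" by blast
      thus False using disjt by blast
    qed
    define F where "F = (\<lambda>y. f t (inv_into B (\<phi> t) y))"
    have FS: "F (\<psi>S t x) = f t x" if "x \<in> A \<inter> BS" for x
    proof -
      have xB: "x \<in> B" using that AB by blast
      have "inv_into B (\<phi> t) (\<phi> t x) = x"
      proof (rule inv_pre[OF xB])
        fix x' assume "x' \<in> B" "\<phi> t x' = \<phi> t x"
        thus "x' = x"
          using uniq_pre[of x BS x' B "\<phi> t" "\<psi>S t" BF "\<psi>F t"] that aSt aFt injS disjt opS contF restt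
          by blast
      qed
      thus ?thesis using that aSt F_def by simp
    qed
    have FF: "F (\<psi>F t x) = f t x" if "x \<in> A \<inter> BF" for x
    proof -
      have xB: "x \<in> B" using that AB by blast
      have "inv_into B (\<phi> t) (\<phi> t x) = x"
      proof (rule inv_pre[OF xB])
        fix x' assume "x' \<in> B" "\<phi> t x' = \<phi> t x"
        thus "x' = x"
          using uniq_pre[of x BF x' B "\<phi> t" "\<psi>F t" BS "\<psi>S t"] that aSt aFt injF disjt' opF contS restt'
          by blast
      qed
      thus ?thesis using that aFt F_def by simp
    qed
    have VSo: "open (BS \<inter> B)" "bounded (BS \<inter> B)" using BSo Bo by auto
    have VFo: "open (BF \<inter> B)" "bounded (BF \<inter> B)" using BSo Bo by auto
    have injS': "inj_on (\<psi>S t) (BS \<inter> B)" by (rule inj_on_subset[OF injS]) (use closure_subset in blast)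
    have injF': "inj_on (\<psi>F t) (BF \<inter> B)" by (rule inj_on_subset[OF injF]) (use closure_subset in blast)
    have LS': "LS-lipschitz_on (BS \<inter> B) (\<psi>S t)" by (rule lipschitz_on_subset[OF LS]) (use closure_subset in blast)
    have LF': "LF-lipschitz_on (BF \<inter> B) (\<psi>F t)" by (rule lipschitz_on_subset[OF LF]) (use closure_subset in blast)
    have derS: "\<And>x. x \<in> BS \<inter> B - ZS \<Longrightarrow> (\<psi>S t has_derivative DS x) (at x)" using ZS(2) by blast
    have derF: "\<And>x. x \<in> BF \<inter> B - ZF \<Longrightarrow> (\<psi>F t has_derivative DF x) (at x)" using ZF(2) by blast
    have subS: "\<psi>S t ` (BS \<inter> B) \<subseteq> \<phi> t ` B"
    proof
      fix y assume "y \<in> \<psi>S t ` (BS \<inter> B)"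
      then obtain x where "x \<in> BS \<inter> B" "y = \<psi>S t x" by blast
      thus "y \<in> \<phi> t ` B" using aSt by (metis IntD1 IntD2 imageI)
    qed
    have subF: "\<psi>F t ` (BF \<inter> B) \<subseteq> \<phi> t ` B"
    proof
      fix y assume "y \<in> \<psi>F t ` (BF \<inter> B)"
      then obtain x where "x \<in> BF \<inter> B" "y = \<psi>F t x" by blast
      thus "y \<in> \<phi> t ` B" using aFt by (metis IntD1 IntD2 imageI)
    qed
    have massS: "(LINT y:\<psi>S t ` U|lebesgue. \<rho>s t y) = (LINT x:U|lebesgue. \<rho>s t0 x)"
      if "U \<in> fam" "U \<subseteq> BS \<inter> B" for U
    proof -
      have UM: "U \<in> MS" using that MS_def by blast
      have "t \<notin> NS U" using tN UM Ntot_def by blast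
      moreover have "t0 \<notin> NS U" using NS[OF UM] P_def by blast
      ultimately have "(LINT y:\<phi> t ` U|lebesgue. \<rho>s t y) = (LINT y:\<phi> t0 ` U|lebesgue. \<rho>s t0 y)"
        using NS[OF UM] tI t0I unfolding P_def by blast
      moreover have "\<phi> t ` U = \<psi>S t ` U" by (rule image_cong) (use that aSt in auto)
      moreover have "\<phi> t0 ` U = U" using img0 that by blast
      ultimately show ?thesis by simp
    qed
    have massF: "(LINT y:\<psi>F t ` U|lebesgue. \<rho>s t y) = (LINT x:U|lebesgue. \<rho>s t0 x)"
      if "U \<in> fam" "U \<subseteq> BF \<inter> B" for U
    proof -
      have UM: "U \<in> MF" using that MF_def by blast
      have "t \<notin> NF U" using tN UM Ntot_def by blast
      moreover have "t0 \<notin> NF U" using NF[OF UM] P_def by blast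
      ultimately have "(LINT y:\<phi> t ` U|lebesgue. \<rho>s t y) = (LINT y:\<phi> t0 ` U|lebesgue. \<rho>s t0 y)"
        using NF[OF UM] tI t0I unfolding P_def by blast
      moreover have "\<phi> t ` U = \<psi>F t ` U" by (rule image_cong) (use that aFt in auto)
      moreover have "\<phi> t0 ` U = U" using img0 that by blast
      ultimately show ?thesis by simp
    qed
    have AS: "A \<inter> BS \<subseteq> BS \<inter> B" "A \<inter> BS \<in> sets lebesgue" "A \<inter> BS \<subseteq> B"
      using AB Ao BSo by auto
    have AF: "A \<inter> BF \<subseteq> BF \<inter> B" "A \<inter> BF \<in> sets lebesgue" "A \<inter> BF \<subseteq> B"
      using AB Ao BSo by auto
    have BSB: "BS \<inter> B \<subseteq> B" "BF \<inter> B \<subseteq> B" by auto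
    note regS = region[OF VSo injS' LS' ZS(1) derS \<rho>t subS \<rho>0 BSB(1) massS AS(1,2) ft AS(3) FS]
    note regF = region[OF VFo injF' LF' ZF(1) derF \<rho>t subF \<rho>0 BSB(2) massF AF(1,2) ft AF(3) FF]
    define R where "R = A - (BS \<union> BF)"
    have VFsub: "VF k \<subseteq> BF" if "k \<in> KF" for k
    proof -
      have "open (VF k)" using cemVF that lipschitz_domain_def by blast
      moreover have "VF k \<subseteq> (\<Union>k\<in>KF. closure (VF k))" using that closure_subset by blast
      ultimately show ?thesis unfolding BF_def region_union_def by (simp add: interior_maximal)
    qed
    have VSsub: "VS k \<subseteq> BS" if "k \<in> KS" for k
    proof -
      have "open (VS k)" using cemVS that lipschitz_domain_def by blast
      moreover have "VS k \<subseteq> (\<Union>k\<in>KS. closure (VS k))" using that closure_subset by blast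
      ultimately show ?thesis unfolding BS_def region_union_def by (simp add: interior_maximal)
    qed
    have Rsub: "R \<subseteq> (\<Union>k\<in>KF. frontier (VF k)) \<union> (\<Union>k\<in>KS. frontier (VS k))"
    proof
      fix x assume xR: "x \<in> R"
      hence xB: "x \<in> B" using AB R_def by blast
      have "x \<notin> (\<Union>k\<in>KF. VF k)" using xR VFsub R_def by blast
      moreover have "x \<notin> (\<Union>k\<in>KS. VS k)" using xR VSsub R_def by blast
      ultimately have "x \<in> interior_boundary B KF VF KS VS" using xB cemB by blast
      thus "x \<in> (\<Union>k\<in>KF. frontier (VF k)) \<union> (\<Union>k\<in>KS. frontier (VS k))"
        unfolding interior_boundary_def by blast
    qed
    have negFr: "negligible ((\<Union>k\<in>KF. frontier (VF k)) \<union> (\<Union>k\<in>KS. frontier (VS k)))"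
    proof (rule negligible_Un)
      show "negligible (\<Union>k\<in>KF. frontier (VF k))"
        using cemKF cemVF lipdom_frontier_negligible by (intro negligible_Union) auto
      show "negligible (\<Union>k\<in>KS. frontier (VS k))"
        using cemKS cemVS lipdom_frontier_negligible by (intro negligible_Union) auto
    qed
    have negR: "negligible R" using negligible_subset[OF negFr Rsub] .
    have RB: "R \<subseteq> B - (BS \<union> BF)" using AB R_def by blast
    have negPR: "negligible (\<phi> t ` R)"
    proof -
      have "\<phi> t ` R \<subseteq> \<psi>S t ` (R \<inter> closure BS) \<union> \<psi>F t ` (R \<inter> closure BF)"
      proof
        fix y assume "y \<in> \<phi> t ` R"
        then obtain x where x: "x \<in> R" "y = \<phi> t x" by blast
        hence "(x \<in> closure BS \<and> \<phi> t x = \<psi>S t x) \<or> (x \<in> closure BF \<and> \<phi> t x = \<psi>F t x)"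
          using restt RB by blast
        thus "y \<in> \<psi>S t ` (R \<inter> closure BS) \<union> \<psi>F t ` (R \<inter> closure BF)" using x by blast
      qed
      moreover have "negligible (\<psi>S t ` (R \<inter> closure BS))"
        by (rule lip_neg[OF LS]) (auto intro: negligible_subset[OF negR])
      moreover have "negligible (\<psi>F t ` (R \<inter> closure BF))"
        by (rule lip_neg[OF LF]) (auto intro: negligible_subset[OF negR])
      ultimately show ?thesis by (meson negligible_Un negligible_subset)
    qed
    define X1 where "X1 = \<psi>S t ` (A \<inter> BS)"
    define X2 where "X2 = \<psi>F t ` (A \<inter> BF)"
    define H where "H = (\<lambda>y. F y * \<rho>s t y)"
    have X1eq: "\<phi> t ` (A \<inter> BS) = X1" unfolding X1_def by (rule image_cong) (use aSt in auto)
    have X2eq: "\<phi> t ` (A \<inter> BF) = X2" unfolding X2_def by (rule image_cong) (use aFt in auto)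
    have Adec: "A = (A \<inter> BS) \<union> (A \<inter> BF) \<union> R" by (auto simp: R_def)
    have imgA: "\<phi> t ` A = X1 \<union> X2 \<union> \<phi> t ` R"
      using X1eq X2eq Adec by (metis image_Un)
    have X12: "X1 \<inter> X2 = {}" using disjt X1eq X2eq by blast
    have iX: "set_integrable lebesgue (X1 \<union> X2) H"
      using set_integrable_Un[OF regS(1) regF(1) regS(3) regF(3)] unfolding X1_def X2_def H_def .
    have L1: "(LINT y:X1 \<union> X2|lebesgue. H y) = (LINT y:X1|lebesgue. H y) + (LINT y:X2|lebesgue. H y)"
      using set_integral_Un[OF X12] regS(1) regF(1) unfolding X1_def X2_def H_def by blast
    have n1: "negligible ((X1 \<union> X2) - \<phi> t ` A)"
    proof -
      have "(X1 \<union> X2) - \<phi> t ` A = {}" using imgA by blast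
      thus ?thesis by simp
    qed
    have n2: "negligible (\<phi> t ` A - (X1 \<union> X2))"
      by (rule negligible_subset[OF negPR]) (use imgA in blast)
    have L2: "(LINT y:\<phi> t ` A|lebesgue. H y) = (LINT y:X1 \<union> X2|lebesgue. H y)"
      using spike_set(2)[OF iX n1 n2] .
    have Al: "A \<in> sets lebesgue" using Ao by auto
    have R1: "(LINT x:A|lebesgue. f t x * \<rho>s t0 (\<phi> t0 x)) = (LINT x:A|lebesgue. f t x * \<rho>s t0 x)"
      by (rule set_lebesgue_integral_cong[OF Al]) (use adm0 AB in auto)
    have fint: "set_integrable lebesgue E (\<lambda>x. f t x * \<rho>s t0 x)"
      if "E \<subseteq> A" "E \<in> sets lebesgue" for E
    proof (rule Linf_int[OF Linf_mult[OF Linf_sub[OF ft] Linf_sub[OF \<rho>0]] that(2)])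
      show "E \<subseteq> B" "E \<subseteq> B" using that AB by auto
      show "bounded E" using that Ao bounded_subset by blast
    qed
    have fU: "set_integrable lebesgue ((A \<inter> BS) \<union> (A \<inter> BF)) (\<lambda>x. f t x * \<rho>s t0 x)"
      by (rule fint) (use AS AF in auto)
    have n3: "negligible (((A \<inter> BS) \<union> (A \<inter> BF)) - A)"
    proof -
      have "((A \<inter> BS) \<union> (A \<inter> BF)) - A = {}" by blast
      thus ?thesis by simp
    qed
    have n4: "negligible (A - ((A \<inter> BS) \<union> (A \<inter> BF)))"
      by (rule negligible_subset[OF negR]) (auto simp: R_def)
    have R2: "(LINT x:A|lebesgue. f t x * \<rho>s t0 x) =
        (LINT x:(A \<inter> BS) \<union> (A \<inter> BF)|lebesgue. f t x * \<rho>s t0 x)"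
      using spike_set(2)[OF fU n3 n4] .
    have R3: "(LINT x:(A \<inter> BS) \<union> (A \<inter> BF)|lebesgue. f t x * \<rho>s t0 x) =
        (LINT x:A \<inter> BS|lebesgue. f t x * \<rho>s t0 x) + (LINT x:A \<inter> BF|lebesgue. f t x * \<rho>s t0 x)"
      by (rule set_integral_Un) (use BSBF fint AS AF in auto)
    have "(LINT y:\<phi> t ` A|lebesgue. f t (inv_into B (\<phi> t) y) * \<rho>s t y) = (LINT y:\<phi> t ` A|lebesgue. H y)"
      unfolding H_def F_def ..
    also have "\<dots> = (LINT y:X1|lebesgue. H y) + (LINT y:X2|lebesgue. H y)" using L1 L2 by simp
    also have "\<dots> = (LINT x:A \<inter> BS|lebesgue. f t x * \<rho>s t0 x) + (LINT x:A \<inter> BF|lebesgue. f t x * \<rho>s t0 x)"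
      using regS(2) regF(2) unfolding X1_def X2_def H_def by simp
    also have "\<dots> = (LINT x:A|lebesgue. f t x * \<rho>s t0 (\<phi> t0 x))" using R1 R2 R3 by simp
    finally show ?thesis .
  qed
  show ?thesis
    by (rule AE_I'[OF Nnull]) (use key I_def in blast)
qed


end
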